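(* Let $p,q\ge1$, $\varepsilon\ge0$, $\Xi\subseteq\mathbb{R}^n$, $\mathcal{X}\subseteq\mathbb{R}^m$, and $F:\mathbb{R}^m\times\mathbb{R}^n\to\mathbb{R}$ such that for each $x\in\mathcal{X}$, $F(x,\cdot)$ is Lipschitz on $\Xi$ with respect to $\|\cdot\|_q$ with constant $\gamma_{x,F,q}=\|F(x,\cdot)\|_{\mathrm{Lip},q}<\infty$. Let $\widehat{\xi}_1,\dots,\widehat{\xi}_N\in\Xi$. Define $$\widehat J^{\mathrm S}_{N,p,q}(\varepsilon)=\inf_{x\in\mathcal{X}}\sup_{\mathbb{Q}\in\mathcal{B}_\varepsilon(\widehat{\mathbb{P}}_N)}\mathbb{E}_{\xi\sim\mathbb{Q}}[F(x,\xi)],\qquad \widehat J^{\mathrm A}_{N,p,q}(\varepsilon)=\inf_{x\in\mathcal{X}}\sup_{\mathbb{Q}\in\mathcal{B}_{\varepsilon\gamma_{x,F,q}}(\widehat{\mathbb{P}}_N^{x,F})}\mathbb{E}_{\zeta\sim\mathbb{Q}}[\zeta].$$ Then $\widehat J^{\mathrm S}_{N,p,q}(\varepsilon)\le\widehat J^{\mathrm A}_{N,p,q}(\varepsilon)$.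
   Context: $\widehat{\mathbb{P}}_N=\frac1N\sum_i\delta_{\widehat{\xi}_i}$ and $\widehat{\mathbb{P}}_N^{x,F}=\frac1N\sum_i\delta_{F(x,\widehat{\xi}_i)}$. $W_p$ is the $p$-Wasserstein distance: $W_p(\mu,\nu)=(\inf_\Pi\int\mathbf{d}^p\,d\Pi)^{1/p}$ over couplings $\Pi$ of $\mu,\nu$, for measures with finite $p$-th moments ($\mathcal{P}_p(S)$ denotes such measures on $S$). $\mathcal{B}_\varepsilon(\widehat{\mathbb{P}}_N)=\{\mathbb{Q}\in\mathcal{P}_p(\Xi):W_p(\mathbb{Q},\widehat{\mathbb{P}}_N)\le\varepsilon\}$ with cost $\|\xi-\zeta\|_q$; $\mathcal{B}_r(\widehat{\mathbb{P}}_N^{x,F})=\{\mathbb{Q}\in\mathcal{P}_p(F(x,\Xi)):W_p(\mathbb{Q},\widehat{\mathbb{P}}_N^{x,F})\le r\}$ with cost $|s-t|$, where $F(x,\Xi)$ is the image of $\Xi$ under $F(x,\cdot)$. $\|f\|_{\mathrm{Lip},q}=\sup_{\xi\ne\zeta\in\Xi}(f(\xi)-f(\zeta))/\|\xi-\zeta\|_q$. *)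

theory Defs
  imports "HOL-Probability.Probability"
begin

definition lqnorm :: "real \<Rightarrow> real ^ 'n \<Rightarrow> real" where
  "lqnorm q x = (\<Sum>i\<in>UNIV. \<bar>x $ i\<bar> powr q) powr (1 / q)"

text \<open>Lipschitz seminorm of f on S w.r.t. the q-norm: supremum of difference quotients
  (0 if S has fewer than two points; otherwise the set of quotients is symmetric, so the
  extra 0 does not change the supremum).\<close>
definition lip_quotients :: "real \<Rightarrow> (real ^ 'n \<Rightarrow> real) \<Rightarrow> (real ^ 'n) set \<Rightarrow> real set" where
  "lip_quotients q f S =
     {(f a - f b) / lqnorm q (a - b) | a b. a \<in> S \<and> b \<in> S \<and> a \<noteq> b}"

definition lip_norm :: "real \<Rightarrow> (real ^ 'n \<Rightarrow> real) \<Rightarrow> (real ^ 'n) set \<Rightarrow> real" where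
  "lip_norm q f S = Sup ({0} \<union> lip_quotients q f S)"

definition couplings :: "'a measure \<Rightarrow> 'a measure \<Rightarrow> ('a \<times> 'a) measure set" where
  "couplings M1 M2 = {C. sets C = sets (M1 \<Otimes>\<^sub>M M2) \<and> prob_space C \<and>
      distr C M1 fst = M1 \<and> distr C M2 snd = M2}"

text \<open>p-Wasserstein distance with cost d (for measures with finite p-th moments,
  the infimum is finite).\<close>
definition wasserstein :: "real \<Rightarrow> ('a \<Rightarrow> 'a \<Rightarrow> real) \<Rightarrow> 'a measure \<Rightarrow> 'a measure \<Rightarrow> real" where
  "wasserstein p d M1 M2 =
     enn2real (INF C\<in>couplings M1 M2. \<integral>\<^sup>+ z. ennreal (d (fst z) (snd z) powr p) \<partial>C) powr (1 / p)"

definition Pp :: "real \<Rightarrow> 'a::real_normed_vector set \<Rightarrow> 'a measure set" where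
  "Pp p S = {Q. sets Q = sets (restrict_space borel S) \<and> prob_space Q \<and>
                integrable Q (\<lambda>x. norm x powr p)}"

definition wball :: "real \<Rightarrow> ('a \<Rightarrow> 'a \<Rightarrow> real) \<Rightarrow> 'a::real_normed_vector set
                     \<Rightarrow> 'a measure \<Rightarrow> real \<Rightarrow> 'a measure set" where
  "wball p d S P r = {Q \<in> Pp p S. wasserstein p d Q P \<le> r}"

definition empirical :: "nat \<Rightarrow> (nat \<Rightarrow> 'a) \<Rightarrow> 'a::topological_space set \<Rightarrow> 'a measure" where
  "empirical N xi S = distr (uniform_count_measure {..<N}) (restrict_space borel S) xi"

definition J_S :: "real \<Rightarrow> real \<Rightarrow> real \<Rightarrow> (real ^ 'm) set \<Rightarrow> (real ^ 'n) set
                   \<Rightarrow> (real ^ 'm \<Rightarrow> real ^ 'n \<Rightarrow> real) \<Rightarrow> nat \<Rightarrow> (nat \<Rightarrow> real ^ 'n) \<Rightarrow> ereal" where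
  "J_S p q \<epsilon> X \<Xi> F N xi =
     (INF x\<in>X. SUP Q\<in>wball p (\<lambda>a b. lqnorm q (a - b)) \<Xi> (empirical N xi \<Xi>) \<epsilon>.
        ereal (\<integral>\<xi>. F x \<xi> \<partial>Q))"

definition J_A :: "real \<Rightarrow> real \<Rightarrow> real \<Rightarrow> (real ^ 'm) set \<Rightarrow> (real ^ 'n) set
                   \<Rightarrow> (real ^ 'm \<Rightarrow> real ^ 'n \<Rightarrow> real) \<Rightarrow> nat \<Rightarrow> (nat \<Rightarrow> real ^ 'n) \<Rightarrow> ereal" where
  "J_A p q \<epsilon> X \<Xi> F N xi =
     (INF x\<in>X. SUP Q\<in>wball p (\<lambda>s t. \<bar>s - t\<bar>) (F x ` \<Xi>)
                        (empirical N (\<lambda>i. F x (xi i)) (F x ` \<Xi>)) (\<epsilon> * lip_norm q (F x) \<Xi>).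
        ereal (\<integral>\<zeta>. \<zeta> \<partial>Q))"

end

theory Submission
  imports Defs
begin


lemma lqnorm_nonneg: "lqnorm q v \<ge> 0"
  unfolding lqnorm_def by simp

lemma lqnorm_minus: "lqnorm q (a - b) = lqnorm q (b - a)"
  unfolding lqnorm_def by (simp add: abs_minus_commute)

lemma lqnorm_pos:
  assumes "q > 0" "v \<noteq> 0" shows "lqnorm q v > 0"
proof -
  obtain i where i: "v $ i \<noteq> 0" using assms(2) by (metis vec_eq_iff zero_index)
  have "0 < \<bar>v $ i\<bar> powr q" using i by simp
  also have "\<dots> \<le> (\<Sum>j\<in>UNIV. \<bar>v $ j\<bar> powr q)"
    by (rule member_le_sum) auto
  finally show ?thesis unfolding lqnorm_def by simp
qed

lemma lqnorm_le:
  assumes "q \<ge> 1" shows "lqnorm q (v::real^'n) \<le> real CARD('n) * norm v"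
proof -
  have "(\<Sum>j\<in>UNIV. \<bar>v $ j\<bar> powr q) \<le> (\<Sum>j\<in>(UNIV::'n set). norm v powr q)"
    by (intro sum_mono powr_mono2) (use assms in \<open>auto simp: component_le_norm_cart\<close>)
  also have "\<dots> = real CARD('n) * norm v powr q" by simp
  finally have "lqnorm q v \<le> (real CARD('n) * norm v powr q) powr (1/q)"
    unfolding lqnorm_def by (intro powr_mono2) (use assms in \<open>auto intro: sum_nonneg\<close>)
  also have "\<dots> = real CARD('n) powr (1/q) * norm v"
    using assms by (simp add: powr_mult powr_powr)
  also have "\<dots> \<le> real CARD('n) * norm v"
  proof (intro mult_right_mono)
    have "real CARD('n) \<ge> 1" by simp
    then show "real CARD('n) powr (1/q) \<le> real CARD('n)"
      using assms by (metis powr_le_cancel_iff powr_one_gt_zero_iff le_less_trans  powr_mono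
         divide_le_eq_1 less_le_not_le not_one_le_zero powr_one order.trans zero_less_one)
  qed simp
  finally show ?thesis .
qed

lemma lqnorm_measurable[measurable]: "lqnorm q \<in> borel_measurable borel"
  unfolding lqnorm_def by measurable

lemma lip_norm_nonneg: "bdd_above (lip_quotients q f S) \<Longrightarrow> lip_norm q f S \<ge> 0"
  unfolding lip_norm_def by (rule cSup_upper) auto

lemma lip_bound:
  assumes q: "q \<ge> 1" and bdd: "bdd_above (lip_quotients q f S)" and a: "a \<in> S" and b: "b \<in> S"
  shows "\<bar>f a - f b\<bar> \<le> lip_norm q f S * lqnorm q (a - b)"
proof (cases "a = b")
  case True then show ?thesis using lip_norm_nonneg[OF bdd] by (simp add: mult_nonneg_nonneg lqnorm_nonneg)
next
  case False
  have pos: "lqnorm q (a - b) > 0" using False q by (intro lqnorm_pos) auto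
  have bdd': "bdd_above ({0} \<union> lip_quotients q f S)" using bdd by auto
  have "(f a - f b) / lqnorm q (a - b) \<le> lip_norm q f S"
    unfolding lip_norm_def using a b False
    by (intro cSup_upper[OF _ bdd']) (auto simp: lip_quotients_def)
  moreover have "(f b - f a) / lqnorm q (a - b) \<le> lip_norm q f S"
    unfolding lip_norm_def lqnorm_minus[of q a b] using a b False
    by (intro cSup_upper[OF _ bdd']) (auto simp: lip_quotients_def)
  ultimately show ?thesis using pos by (auto simp: abs_if field_simps)
qed

lemma powr_sum_le:
  fixes a b p :: real assumes "a \<ge> 0" "b \<ge> 0" "p \<ge> 0"
  shows "(a + b) powr p \<le> 2 powr p * (a powr p + b powr p)"
proof -
  have "(a + b) powr p \<le> (2 * max a b) powr p"
    using assms by (intro powr_mono2) auto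
  also have "\<dots> = 2 powr p * max a b powr p" using assms by (simp add: powr_mult)
  also have "\<dots> \<le> 2 powr p * (a powr p + b powr p)"
    by (intro mult_left_mono) (auto simp: max_def)
  finally show ?thesis .
qed



lemma INF_cmult_ennreal:
  fixes c :: ennreal and f :: "'a \<Rightarrow> ennreal"
  assumes "c < top" "A \<noteq> {}"
  shows "c * (INF x\<in>A. f x) = (INF x\<in>A. c * f x)"
proof -
  have "(\<lambda>x. c * x) (Inf (f ` A)) = (INF s\<in>f ` A. c * s)"
  proof (rule continuous_at_Inf_mono)
    show "mono ((*) c)" by (auto simp: mono_def mult_left_mono)
    show "continuous (at_right (Inf (f ` A))) ((*) c)"
      unfolding continuous_within
      by (rule ennreal_tendsto_cmult[OF assms(1)]) (rule tendsto_ident_at)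
  qed (use assms in auto)
  then show ?thesis by (simp add: image_comp)
qed

lemma measurable_restrict_ident: "(\<lambda>x. x) \<in> borel_measurable (restrict_space borel S)"
  by (rule measurable_restrict_space1) simp

lemma fst_borel: "sets M = sets (restrict_space borel A \<Otimes>\<^sub>M restrict_space borel B) \<Longrightarrow> fst \<in> borel_measurable M"
  by (subst measurable_cong_sets[of M "restrict_space borel A \<Otimes>\<^sub>M restrict_space borel B" borel borel])
     (auto intro: measurable_compose[OF measurable_fst measurable_restrict_ident])
lemma snd_borel: "sets M = sets (restrict_space borel A \<Otimes>\<^sub>M restrict_space borel B) \<Longrightarrow> snd \<in> borel_measurable M"
  by (subst measurable_cong_sets[of M "restrict_space borel A \<Otimes>\<^sub>M restrict_space borel B" borel borel])
     (auto intro: measurable_compose[OF measurable_snd measurable_restrict_ident])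

lemma empirical_facts:
  fixes xi :: "nat \<Rightarrow> 'a::topological_space"
  assumes N: "N \<ge> 1" and xi: "\<And>i. i < N \<Longrightarrow> xi i \<in> S"
  shows "xi \<in> measurable (uniform_count_measure {..<N}) (restrict_space borel S)"
    and "prob_space (empirical N xi S)"
    and "sets (empirical N xi S) = sets (restrict_space borel S)"
proof -
  show m: "xi \<in> measurable (uniform_count_measure {..<N}) (restrict_space borel S)"
    by (rule measurable_restrict_space2)
       (use xi in \<open>auto simp: space_uniform_count_measure measurable_def sets_uniform_count_measure\<close>)
  show "prob_space (empirical N xi S)" unfolding empirical_def
    by (rule prob_space.prob_space_distr[OF prob_space_uniform_count_measure m]) (use N in \<open>auto simp: lessThan_empty_iff\<close>)
  show "sets (empirical N xi S) = sets (restrict_space borel S)" unfolding empirical_def by simp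
qed



lemma product_coupling:
  assumes "prob_space M1" "prob_space M2"
  shows "M1 \<Otimes>\<^sub>M M2 \<in> couplings M1 M2"
proof -
  interpret pp: pair_prob_space M1 M2
    using assms by (simp add: pair_prob_space_def pair_sigma_finite_def prob_space_imp_sigma_finite)
  have 1: "prob_space (M1 \<Otimes>\<^sub>M M2)" by (rule pp.P.prob_space_axioms)
  have 2: "distr (M1 \<Otimes>\<^sub>M M2) M1 fst = M1" by (rule pp.M2.distr_pair_fst)
  have 3: "distr (M1 \<Otimes>\<^sub>M M2) M2 snd = M2"
  proof (intro measure_eqI)
    fix A assume A: "A \<in> sets (distr (M1 \<Otimes>\<^sub>M M2) M2 snd)"
    then have "emeasure (distr (M1 \<Otimes>\<^sub>M M2) M2 snd) A = emeasure (M1 \<Otimes>\<^sub>M M2) (space M1 \<times> A)"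
      by (auto simp add: emeasure_distr space_pair_measure dest: sets.sets_into_space intro!: arg_cong2[where f=emeasure])
    with A show "emeasure (distr (M1 \<Otimes>\<^sub>M M2) M2 snd) A = emeasure M2 A"
      by (simp add: pp.M2.emeasure_pair_measure_Times pp.M1.emeasure_space_1)
  qed simp
  show ?thesis unfolding couplings_def using 1 2 3 by blast
qed

lemma coupling_cost_finite:
  fixes d :: "'a \<Rightarrow> 'a \<Rightarrow> real"
  assumes C: "C \<in> couplings M1 M2"
    and h: "integrable M1 h" and g: "integrable M2 g"
    and dm: "(\<lambda>z. d (fst z) (snd z)) \<in> borel_measurable C"
    and bnd: "\<And>a b. a \<in> space M1 \<Longrightarrow> b \<in> space M2 \<Longrightarrow> 0 \<le> d a b \<and> d a b \<le> h a + g b \<and> 0 \<le> h a \<and> 0 \<le> g b"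
  shows "(\<integral>\<^sup>+ z. ennreal (d (fst z) (snd z)) \<partial>C) < \<infinity>"
proof -
  have sC: "sets C = sets (M1 \<Otimes>\<^sub>M M2)" and m1: "distr C M1 fst = M1" and m2: "distr C M2 snd = M2"
    using C unfolding couplings_def by blast+
  have spC: "space C = space M1 \<times> space M2"
    using sets_eq_imp_space_eq[OF sC] by (simp add: space_pair_measure)
  have fstm: "fst \<in> measurable C M1"
    by (subst measurable_cong_sets[OF sC refl]) (rule measurable_fst)
  have sndm: "snd \<in> measurable C M2"
    by (subst measurable_cong_sets[OF sC refl]) (rule measurable_snd)
  have hm[measurable]: "h \<in> borel_measurable M1" and gm[measurable]: "g \<in> borel_measurable M2"
    using h g by (auto dest: integrableD(1))
  have "(\<integral>\<^sup>+ z. ennreal (d (fst z) (snd z)) \<partial>C) \<le> (\<integral>\<^sup>+ z. ennreal (h (fst z)) + ennreal (g (snd z)) \<partial>C)"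
  proof (rule nn_integral_mono)
    fix z assume "z \<in> space C"
    then have "fst z \<in> space M1" "snd z \<in> space M2" using spC by (metis mem_Times_iff)+
    then show "ennreal (d (fst z) (snd z)) \<le> ennreal (h (fst z)) + ennreal (g (snd z))"
    proof -
      assume a: "fst z \<in> space M1" "snd z \<in> space M2"
      have b: "0 \<le> h (fst z)" "0 \<le> g (snd z)" "d (fst z) (snd z) \<le> h (fst z) + g (snd z)"
        using bnd[OF a] by auto
      have "ennreal (d (fst z) (snd z)) \<le> ennreal (h (fst z) + g (snd z))" by (rule ennreal_leI) (rule b(3))
      also have "\<dots> = ennreal (h (fst z)) + ennreal (g (snd z))" by (rule ennreal_plus) (use b in auto)
      finally show ?thesis .
    qed
  qed
  also have "\<dots> = (\<integral>\<^sup>+ z. ennreal (h (fst z)) \<partial>C) + (\<integral>\<^sup>+ z. ennreal (g (snd z)) \<partial>C)"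
  proof (rule nn_integral_add)
    have "(\<lambda>z. h (fst z)) \<in> borel_measurable C" using measurable_compose[OF fstm hm] .
    then show "(\<lambda>z. ennreal (h (fst z))) \<in> borel_measurable C" by measurable
    have "(\<lambda>z. g (snd z)) \<in> borel_measurable C" using measurable_compose[OF sndm gm] .
    then show "(\<lambda>z. ennreal (g (snd z))) \<in> borel_measurable C" by measurable
  qed
  also have "(\<integral>\<^sup>+ z. ennreal (h (fst z)) \<partial>C) = (\<integral>\<^sup>+ x. ennreal (h x) \<partial>M1)"
  proof -
    have "(\<lambda>x. ennreal (h x)) \<in> borel_measurable (distr C M1 fst)" unfolding m1 by measurable
    then have "(\<integral>\<^sup>+ x. ennreal (h x) \<partial>(distr C M1 fst)) = (\<integral>\<^sup>+ z. ennreal (h (fst z)) \<partial>C)"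
      by (rule nn_integral_distr[OF fstm])
    then show ?thesis unfolding m1 by simp
  qed
  also have "(\<integral>\<^sup>+ z. ennreal (g (snd z)) \<partial>C) = (\<integral>\<^sup>+ x. ennreal (g x) \<partial>M2)"
  proof -
    have "(\<lambda>x. ennreal (g x)) \<in> borel_measurable (distr C M2 snd)" unfolding m2 by measurable
    then have "(\<integral>\<^sup>+ x. ennreal (g x) \<partial>(distr C M2 snd)) = (\<integral>\<^sup>+ z. ennreal (g (snd z)) \<partial>C)"
      by (rule nn_integral_distr[OF sndm])
    then show ?thesis unfolding m2 by simp
  qed
  also have "(\<integral>\<^sup>+ x. ennreal (h x) \<partial>M1) + (\<integral>\<^sup>+ x. ennreal (g x) \<partial>M2) < \<infinity>"
    using integrableD(2)[OF h] integrableD(2)[OF g] by (simp add: less_top)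
  finally show ?thesis .
qed



lemma empirical_moment:
  fixes xi :: "nat \<Rightarrow> 'a::{real_normed_vector, second_countable_topology}"
  assumes N: "N \<ge> 1" and xi: "\<And>i. i < N \<Longrightarrow> xi i \<in> S"
  shows "integrable (empirical N xi S) (\<lambda>x. norm x powr p)"
proof -
  let ?U = "uniform_count_measure {..<N}"
  have xim: "xi \<in> measurable ?U (restrict_space borel S)" by (rule empirical_facts(1)[OF N xi])
  have pU: "prob_space ?U" by (rule prob_space_uniform_count_measure) (use N in \<open>auto simp: lessThan_empty_iff\<close>)
  have nm: "(\<lambda>x::'a. norm x powr p) \<in> borel_measurable (restrict_space borel S)"
    by (rule measurable_restrict_space1) measurable
  have "integrable ?U (\<lambda>i. norm (xi i) powr p)"
  proof (rule finite_measure.integrable_const_bound[where B="\<Sum>j<N. norm (xi j) powr p"])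
    show "finite_measure ?U" using pU by (rule prob_space.finite_measure)
    show "AE x in ?U. norm (norm (xi x) powr p) \<le> (\<Sum>j<N. norm (xi j) powr p)"
    proof (rule AE_I2)
      fix x assume "x \<in> space ?U"
      then have "x \<in> {..<N}" by (simp add: space_uniform_count_measure)
      then show "norm (norm (xi x) powr p) \<le> (\<Sum>j<N. norm (xi j) powr p)"
        using member_le_sum[of x "{..<N}" "\<lambda>j. norm (xi j) powr p"] by simp
    qed
    show "(\<lambda>i. norm (xi i) powr p) \<in> borel_measurable ?U"
      by (subst measurable_cong_sets[OF sets_uniform_count_measure_count_space refl]) simp
  qed
  then show ?thesis unfolding empirical_def
    by (subst integrable_distr_eq[OF xim nm])
qed



lemma key:
  fixes f :: "real^'n \<Rightarrow> real" and \<Xi> :: "(real^'n) set" and xi :: "nat \<Rightarrow> real^'n"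
  assumes p: "p \<ge> 1" and q: "q \<ge> 1" and bdd: "bdd_above (lip_quotients q f \<Xi>)"
    and N: "N \<ge> 1" and xi: "\<And>i. i < N \<Longrightarrow> xi i \<in> \<Xi>"
    and Q: "Q \<in> wball p (\<lambda>a b. lqnorm q (a - b)) \<Xi> (empirical N xi \<Xi>) \<epsilon>"
  shows "distr Q (restrict_space borel (f ` \<Xi>)) f
           \<in> wball p (\<lambda>s t. \<bar>s - t\<bar>) (f ` \<Xi>) (empirical N (\<lambda>i. f (xi i)) (f ` \<Xi>)) (\<epsilon> * lip_norm q f \<Xi>)
         \<and> integral\<^sup>L Q f = integral\<^sup>L (distr Q (restrict_space borel (f ` \<Xi>)) f) (\<lambda>z. z)"
proof -
  define \<gamma> where "\<gamma> = lip_norm q f \<Xi>"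
  define c where "c = real CARD('n)"
  define R :: "(real^'n) measure" where "R = restrict_space borel \<Xi>"
  define R' :: "real measure" where "R' = restrict_space borel (f ` \<Xi>)"
  define P where "P = empirical N xi \<Xi>"
  define P' where "P' = empirical N (\<lambda>i. f (xi i)) (f ` \<Xi>)"
  define Q' where "Q' = distr Q R' f"
  have \<gamma>0: "\<gamma> \<ge> 0" using lip_norm_nonneg[OF bdd] \<gamma>_def by simp
  have c0: "c \<ge> 0" using c_def by simp
  have lip: "\<And>a b. a \<in> \<Xi> \<Longrightarrow> b \<in> \<Xi> \<Longrightarrow> \<bar>f a - f b\<bar> \<le> \<gamma> * lqnorm q (a - b)"
    using lip_bound[OF q bdd] \<gamma>_def by simp
  have sQ: "sets Q = sets R" and probQ: "prob_space Q" and intQ: "integrable Q (\<lambda>x. norm x powr p)"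
    and WQ: "wasserstein p (\<lambda>a b. lqnorm q (a - b)) Q P \<le> \<epsilon>"
    using Q unfolding wball_def Pp_def R_def P_def by blast+
  have spQ: "space Q = \<Xi>" using sets_eq_imp_space_eq[OF sQ] unfolding R_def
    by (simp only: space_restrict_space space_borel Int_UNIV_right)
  have lip2: "\<And>a b. a \<in> \<Xi> \<Longrightarrow> b \<in> \<Xi> \<Longrightarrow> \<bar>f a - f b\<bar> \<le> \<gamma> * c * norm (a - b)"
  proof -
    fix a b assume ab: "a \<in> \<Xi>" "b \<in> \<Xi>"
    have "\<bar>f a - f b\<bar> \<le> \<gamma> * lqnorm q (a - b)" by (rule lip[OF ab])
    also have "\<dots> \<le> \<gamma> * (c * norm (a - b))"
      using lqnorm_le[OF q, of "a - b"] \<gamma>0 c_def by (intro mult_left_mono) auto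
    finally show "\<bar>f a - f b\<bar> \<le> \<gamma> * c * norm (a - b)" by (simp add: mult.assoc)
  qed
  have "(\<gamma> * c)-lipschitz_on \<Xi> f"
  proof (rule lipschitz_onI)
    fix a b assume "a \<in> \<Xi>" "b \<in> \<Xi>"
    then show "dist (f a) (f b) \<le> \<gamma> * c * dist a b" using lip2 by (simp add: dist_norm dist_real_def)
  next
    show "0 \<le> \<gamma> * c" using \<gamma>0 c0 by simp
  qed
  then have cont: "continuous_on \<Xi> f" by (rule lipschitz_on_continuous_on)
  have fR: "f \<in> measurable R R'" unfolding R_def R'_def
  proof (rule measurable_restrict_space2)
    show "f \<in> space (restrict_space borel \<Xi>) \<rightarrow> f ` \<Xi>"
      by (simp only: space_restrict_space space_borel Int_UNIV_right) blast
    show "f \<in> borel_measurable (restrict_space borel \<Xi>)"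
      by (rule borel_measurable_continuous_on_restrict[OF cont])
  qed
  have fQ: "f \<in> measurable Q R'" by (subst measurable_cong_sets[OF sQ refl]) (rule fR)
  have xim: "xi \<in> measurable (uniform_count_measure {..<N}) R"
    and probP: "prob_space P" and sP: "sets P = sets R"
    using empirical_facts[of N xi \<Xi>, OF N xi] unfolding R_def P_def by blast+
  have fP: "f \<in> measurable P R'" by (subst measurable_cong_sets[OF sP refl]) (rule fR)
  have P'eq: "P' = distr P R' f"
    unfolding P'_def P_def empirical_def R_def[symmetric] R'_def[symmetric]
    by (subst distr_distr[OF fR xim]) (simp add: comp_def)
  have sQ': "sets Q' = sets R'" unfolding Q'_def by simp
  have probQ': "prob_space Q'" unfolding Q'_def by (rule prob_space.prob_space_distr[OF probQ fQ])
  have sP': "sets P' = sets R'" unfolding P'eq by simp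
  have probP': "prob_space P'" unfolding P'eq by (rule prob_space.prob_space_distr[OF probP fP])
  have idm: "(\<lambda>z::real. z) \<in> borel_measurable R'" unfolding R'_def by (rule measurable_restrict_ident)
  have integral_eq: "integral\<^sup>L Q f = integral\<^sup>L Q' (\<lambda>z. z)"
    unfolding Q'_def by (subst integral_distr[OF fQ idm]) simp
  have x0: "xi 0 \<in> \<Xi>" using xi N by simp
  define A where "A = \<bar>f (xi 0)\<bar> + \<gamma> * c * norm (xi 0)"
  define B where "B = \<gamma> * c"
  have A0: "A \<ge> 0" and B0: "B \<ge> 0" using \<gamma>0 c0 unfolding A_def B_def by auto
  have fbound: "\<And>x. x \<in> \<Xi> \<Longrightarrow> \<bar>f x\<bar> \<le> A + B * norm x"
  proof -
    fix x assume x: "x \<in> \<Xi>"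
    have "\<bar>f x\<bar> \<le> \<bar>f (xi 0)\<bar> + \<bar>f x - f (xi 0)\<bar>" by simp
    also have "\<dots> \<le> \<bar>f (xi 0)\<bar> + \<gamma> * c * norm (x - xi 0)" using lip2[OF x x0] by simp
    also have "\<gamma> * c * norm (x - xi 0) \<le> \<gamma> * c * (norm x + norm (xi 0))"
      using \<gamma>0 c0 by (intro mult_left_mono norm_triangle_ineq4) auto
    finally show "\<bar>f x\<bar> \<le> A + B * norm x" unfolding A_def B_def by (simp add: algebra_simps)
  qed
  have nm: "(\<lambda>t::real. norm t powr p) \<in> borel_measurable R'"
    unfolding R'_def by (rule measurable_restrict_space1) measurable
  have "integrable Q (\<lambda>x. norm (f x) powr p)"
  proof (rule Bochner_Integration.integrable_bound[where f="\<lambda>x. 2 powr p * A powr p + 2 powr p * B powr p * norm x powr p"])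
    show "integrable Q (\<lambda>x. 2 powr p * A powr p + 2 powr p * B powr p * norm x powr p)"
      by (rule Bochner_Integration.integrable_add[OF finite_measure.integrable_const[OF prob_space.finite_measure[OF probQ]]
            integrable_mult_right[OF intQ]])
    show "(\<lambda>x. norm (f x) powr p) \<in> borel_measurable Q"
      using measurable_compose[OF fQ nm] .
    show "AE x in Q. norm (norm (f x) powr p) \<le> norm (2 powr p * A powr p + 2 powr p * B powr p * norm x powr p)"
    proof (rule AE_I2)
      fix x assume "x \<in> space Q"
      then have x: "x \<in> \<Xi>" using spQ by simp
      have "norm (f x) powr p \<le> (A + B * norm x) powr p"
        using fbound[OF x] p by (intro powr_mono2) auto
      also have "\<dots> \<le> 2 powr p * (A powr p + (B * norm x) powr p)"
        using A0 B0 p by (intro powr_sum_le) auto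
      also have "\<dots> = 2 powr p * A powr p + 2 powr p * B powr p * norm x powr p"
        using B0 by (simp add: powr_mult algebra_simps)
      finally show "norm (norm (f x) powr p) \<le> norm (2 powr p * A powr p + 2 powr p * B powr p * norm x powr p)"
        by simp
    qed
  qed
  then have intQ': "integrable Q' (\<lambda>t. norm t powr p)"
    unfolding Q'_def by (subst integrable_distr_eq[OF fQ nm])
  define costS where "costS C = (\<integral>\<^sup>+ z. ennreal (lqnorm q (fst z - snd z) powr p) \<partial>C)"
    for C :: "((real^'n) \<times> (real^'n)) measure"
  define costA where "costA C = (\<integral>\<^sup>+ z. ennreal (\<bar>fst z - snd z\<bar> powr p) \<partial>C)"
    for C :: "(real \<times> real) measure"
  define T where "T = (\<lambda>z::((real^'n) \<times> (real^'n)). (f (fst z), f (snd z)))"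
  have WS_eq: "wasserstein p (\<lambda>a b. lqnorm q (a - b)) Q P = enn2real (INF C\<in>couplings Q P. costS C) powr (1/p)"
    unfolding wasserstein_def costS_def by (rule refl)
  have WA_eq: "wasserstein p (\<lambda>s t. \<bar>s - t\<bar>) Q' P' = enn2real (INF C\<in>couplings Q' P'. costA C) powr (1/p)"
    unfolding wasserstein_def costA_def by (rule refl)
  have sRR: "sets (Q \<Otimes>\<^sub>M P) = sets (R \<Otimes>\<^sub>M R)" by (rule sets_pair_measure_cong[OF sQ sP])
  have lqm: "(\<lambda>z. lqnorm q (fst z - snd z) powr p) \<in> borel_measurable C"
    if sC: "sets C = sets (Q \<Otimes>\<^sub>M P)" for C
  proof -
    have s2: "sets C = sets (restrict_space borel \<Xi> \<Otimes>\<^sub>M restrict_space borel \<Xi>)"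
      using sC sRR R_def by simp
    have "(\<lambda>z. fst z - snd z) \<in> borel_measurable C"
      by (rule borel_measurable_diff[OF fst_borel[OF s2] snd_borel[OF s2]])
    then have "(\<lambda>z. lqnorm q (fst z - snd z)) \<in> borel_measurable C"
      by (rule measurable_compose[OF _ lqnorm_measurable])
    then show ?thesis by (rule powr_real_measurable[OF _ measurable_const]) simp
  qed
  have abm: "(\<lambda>z. ennreal (\<bar>fst z - snd z\<bar> powr p)) \<in> borel_measurable C"
    if sC: "sets C = sets (R' \<Otimes>\<^sub>M R')" for C
  proof -
    have s2: "sets C = sets (restrict_space borel (f ` \<Xi>) \<Otimes>\<^sub>M restrict_space borel (f ` \<Xi>))"
      using sC R'_def by simp
    have "(\<lambda>z. fst z - snd z) \<in> borel_measurable C"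
      by (rule borel_measurable_diff[OF fst_borel[OF s2] snd_borel[OF s2]])
    then have "(\<lambda>z. \<bar>fst z - snd z\<bar> powr p) \<in> borel_measurable C"
      by (rule measurable_abs_powr)
    then show ?thesis by (rule measurable_compose[OF _ measurable_ennreal])
  qed
  have intP: "integrable P (\<lambda>x. norm x powr p)" unfolding P_def by (rule empirical_moment[OF N xi])
  have spP: "space P = \<Xi>" using sets_eq_imp_space_eq[OF sP] unfolding R_def
    by (simp only: space_restrict_space space_borel Int_UNIV_right)
  define K where "K = 2 powr p * c powr p"
  have fin: "costS C < \<infinity>" if C: "C \<in> couplings Q P" for C
  proof -
    have sC: "sets C = sets (Q \<Otimes>\<^sub>M P)" using C unfolding couplings_def by blast
    show ?thesis unfolding costS_def
    proof (rule coupling_cost_finite[OF C integrable_mult_right[OF intQ, of K] integrable_mult_right[OF intP, of K]])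
      show "(\<lambda>z. lqnorm q (fst z - snd z) powr p) \<in> borel_measurable C" by (rule lqm[OF sC])
      fix a b assume a: "a \<in> space Q" and b: "b \<in> space P"
      have "lqnorm q (a - b) powr p \<le> (c * norm (a - b)) powr p"
        using lqnorm_le[OF q, of "a - b"] p lqnorm_nonneg c_def by (intro powr_mono2) auto
      also have "\<dots> \<le> (c * norm a + c * norm b) powr p"
        using p c0 by (intro powr_mono2) (auto simp flip: distrib_left intro!: mult_left_mono norm_triangle_ineq4)
      also have "\<dots> \<le> 2 powr p * ((c * norm a) powr p + (c * norm b) powr p)"
        using p c0 by (intro powr_sum_le) auto
      also have "\<dots> = K * norm a powr p + K * norm b powr p"
        using c0 unfolding K_def by (simp add: powr_mult algebra_simps)
      finally show "0 \<le> lqnorm q (a - b) powr p \<and> lqnorm q (a - b) powr p \<le> K * norm a powr p + K * norm b powr p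
            \<and> 0 \<le> K * norm a powr p \<and> 0 \<le> K * norm b powr p"
        unfolding K_def by auto
    qed
  qed
  have push: "distr C (R' \<Otimes>\<^sub>M R') T \<in> couplings Q' P' \<and> costA (distr C (R' \<Otimes>\<^sub>M R') T) \<le> ennreal (\<gamma> powr p) * costS C"
    if C: "C \<in> couplings Q P" for C
  proof -
    have sC: "sets C = sets (Q \<Otimes>\<^sub>M P)" and probC: "prob_space C"
      and m1: "distr C Q fst = Q" and m2: "distr C P snd = P"
      using C unfolding couplings_def by blast+
    have sC2: "sets C = sets (R \<Otimes>\<^sub>M R)" using sC sRR by simp
    have fstR: "fst \<in> measurable C R" by (subst measurable_cong_sets[OF sC2 refl]) (rule measurable_fst)
    have sndR: "snd \<in> measurable C R" by (subst measurable_cong_sets[OF sC2 refl]) (rule measurable_snd)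
    have fstQ: "fst \<in> measurable C Q" by (subst measurable_cong_sets[OF sC refl]) (rule measurable_fst)
    have sndP: "snd \<in> measurable C P" by (subst measurable_cong_sets[OF sC refl]) (rule measurable_snd)
    have Tm: "T \<in> measurable C (R' \<Otimes>\<^sub>M R')" unfolding T_def
      by (rule measurable_Pair) (rule measurable_compose[OF fstR fR], rule measurable_compose[OF sndR fR])
    define C' where "C' = distr C (R' \<Otimes>\<^sub>M R') T"
    have sC': "sets C' = sets (Q' \<Otimes>\<^sub>M P')" unfolding C'_def
      using sets_pair_measure_cong[OF sQ' sP'] by simp
    have probC': "prob_space C'" unfolding C'_def by (rule prob_space.prob_space_distr[OF probC Tm])
    have fstQ': "fst \<in> measurable (R' \<Otimes>\<^sub>M R') Q'"
      by (subst measurable_cong_sets[OF refl sQ']) (rule measurable_fst)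
    have sndP': "snd \<in> measurable (R' \<Otimes>\<^sub>M R') P'"
      by (subst measurable_cong_sets[OF refl sP']) (rule measurable_snd)
    have fQQ': "f \<in> measurable Q Q'" by (subst measurable_cong_sets[OF refl sQ']) (rule fQ)
    have fPP': "f \<in> measurable P P'" by (subst measurable_cong_sets[OF refl sP']) (rule fP)
    have mg1: "distr C' Q' fst = Q'"
    proof -
      have "distr C' Q' fst = distr C Q' (fst \<circ> T)" unfolding C'_def by (rule distr_distr[OF fstQ' Tm])
      also have "\<dots> = distr C Q' (f \<circ> fst)" by (rule distr_cong) (auto simp: T_def)
      also have "\<dots> = distr (distr C Q fst) Q' f" by (rule distr_distr[OF fQQ' fstQ, symmetric])
      also have "\<dots> = distr Q Q' f" by (simp only: m1)
      also have "\<dots> = distr Q R' f" by (rule distr_cong[OF refl sQ' refl])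
      also have "\<dots> = Q'" by (simp only: Q'_def)
      finally show ?thesis .
    qed
    have mg2: "distr C' P' snd = P'"
    proof -
      have "distr C' P' snd = distr C P' (snd \<circ> T)" unfolding C'_def by (rule distr_distr[OF sndP' Tm])
      also have "\<dots> = distr C P' (f \<circ> snd)" by (rule distr_cong) (auto simp: T_def)
      also have "\<dots> = distr (distr C P snd) P' f" by (rule distr_distr[OF fPP' sndP, symmetric])
      also have "\<dots> = distr P P' f" by (simp only: m2)
      also have "\<dots> = distr P R' f" by (rule distr_cong[OF refl sP' refl])
      also have "\<dots> = P'" by (simp only: P'eq)
      finally show ?thesis .
    qed
    have coup: "C' \<in> couplings Q' P'" unfolding couplings_def using sC' probC' mg1 mg2 by blast
    have spC: "space C = \<Xi> \<times> \<Xi>"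
      using sets_eq_imp_space_eq[OF sC] by (simp only: space_pair_measure spQ spP)
    have "costA C' = (\<integral>\<^sup>+ z. ennreal (\<bar>f (fst z) - f (snd z)\<bar> powr p) \<partial>C)"
    proof -
      have "(\<lambda>z. ennreal (\<bar>fst z - snd z\<bar> powr p)) \<in> borel_measurable (distr C (R' \<Otimes>\<^sub>M R') T)"
        by (rule abm) simp
      then show ?thesis unfolding costA_def C'_def
        by (subst nn_integral_distr[OF Tm]) (simp_all add: T_def)
    qed
    also have "\<dots> \<le> (\<integral>\<^sup>+ z. ennreal (\<gamma> powr p) * ennreal (lqnorm q (fst z - snd z) powr p) \<partial>C)"
    proof (rule nn_integral_mono)
      fix z assume "z \<in> space C"
      then have a: "fst z \<in> \<Xi>" and b: "snd z \<in> \<Xi>" using spC by (metis mem_Times_iff)+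
      have "\<bar>f (fst z) - f (snd z)\<bar> powr p \<le> (\<gamma> * lqnorm q (fst z - snd z)) powr p"
        using lip[OF a b] p by (intro powr_mono2) auto
      also have "\<dots> = \<gamma> powr p * lqnorm q (fst z - snd z) powr p"
        using \<gamma>0 lqnorm_nonneg by (simp add: powr_mult)
      finally show "ennreal (\<bar>f (fst z) - f (snd z)\<bar> powr p)
          \<le> ennreal (\<gamma> powr p) * ennreal (lqnorm q (fst z - snd z) powr p)"
        by (simp add: ennreal_mult[symmetric] ennreal_leI del: ennreal_mult)
    qed
    also have "\<dots> = ennreal (\<gamma> powr p) * costS C" unfolding costS_def
      by (rule nn_integral_cmult) (rule measurable_compose[OF lqm[OF sC] measurable_ennreal])
    finally show ?thesis using coup unfolding C'_def by blast
  qed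
  have ne: "Q \<Otimes>\<^sub>M P \<in> couplings Q P" by (rule product_coupling[OF probQ probP])
  define IS where "IS = (INF C\<in>couplings Q P. costS C)"
  define IA where "IA = (INF C\<in>couplings Q' P'. costA C)"
  have "IA \<le> (INF C\<in>couplings Q P. costA (distr C (R' \<Otimes>\<^sub>M R') T))"
    unfolding IA_def by (rule INF_mono) (use push in blast)
  also have "\<dots> \<le> (INF C\<in>couplings Q P. ennreal (\<gamma> powr p) * costS C)"
    by (rule INF_mono) (use push in blast)
  also have "\<dots> = ennreal (\<gamma> powr p) * IS" unfolding IS_def
    by (rule INF_cmult_ennreal[symmetric]) (use ne in auto)
  finally have IAle: "IA \<le> ennreal (\<gamma> powr p) * IS" .
  have "IS < \<infinity>" unfolding IS_def using INF_lower[OF ne, of costS] fin[OF ne] by (rule le_less_trans)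
  then obtain s where s0: "s \<ge> 0" and IS_s: "IS = ennreal s" by (auto simp: less_top_ennreal)
  have "enn2real IA \<le> \<gamma> powr p * s"
    using IAle s0 IS_s by (intro enn2real_leI) (auto simp: ennreal_mult)
  then have "enn2real IA powr (1/p) \<le> (\<gamma> powr p * s) powr (1/p)"
    using p by (intro powr_mono2) auto
  also have "\<dots> = \<gamma> * s powr (1/p)"
    using p \<gamma>0 s0 by (simp add: powr_mult powr_powr)
  also have "\<dots> \<le> \<gamma> * \<epsilon>"
  proof (rule mult_left_mono[OF _ \<gamma>0])
    have "enn2real IS powr (1/p) \<le> \<epsilon>" using WQ unfolding WS_eq IS_def .
    then show "s powr (1/p) \<le> \<epsilon>" using s0 unfolding IS_s by simp
  qed
  finally have WA: "wasserstein p (\<lambda>s t. \<bar>s - t\<bar>) Q' P' \<le> \<epsilon> * \<gamma>"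
    unfolding WA_eq IA_def[symmetric] by (simp add: mult.commute)
  have "Q' \<in> wball p (\<lambda>s t. \<bar>s - t\<bar>) (f ` \<Xi>) P' (\<epsilon> * \<gamma>)"
    unfolding wball_def Pp_def using sQ' probQ' intQ' WA R'_def by blast
  then show ?thesis using integral_eq unfolding Q'_def R'_def P'_def \<gamma>_def by blast
qed


theorem corollary1:
  fixes p q \<epsilon> :: real
    and X :: "(real ^ 'm) set" and \<Xi> :: "(real ^ 'n) set"
    and F :: "real ^ 'm \<Rightarrow> real ^ 'n \<Rightarrow> real"
    and N :: nat and xi :: "nat \<Rightarrow> real ^ 'n"
  assumes "p \<ge> 1" and "q \<ge> 1" and "\<epsilon> \<ge> 0"
    and "\<And>x. x \<in> X \<Longrightarrow> bdd_above (lip_quotients q (F x) \<Xi>)"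
    and "N \<ge> 1" and "\<And>i. i < N \<Longrightarrow> xi i \<in> \<Xi>"
  shows "J_S p q \<epsilon> X \<Xi> F N xi \<le> J_A p q \<epsilon> X \<Xi> F N xi"
  unfolding J_S_def J_A_def
proof (rule INF_mono)
  fix x assume x: "x \<in> X"
  have "(SUP Q\<in>wball p (\<lambda>a b. lqnorm q (a - b)) \<Xi> (empirical N xi \<Xi>) \<epsilon>. ereal (\<integral>\<xi>. F x \<xi> \<partial>Q))
     \<le> (SUP Q\<in>wball p (\<lambda>s t. \<bar>s - t\<bar>) (F x ` \<Xi>) (empirical N (\<lambda>i. F x (xi i)) (F x ` \<Xi>)) (\<epsilon> * lip_norm q (F x) \<Xi>).
        ereal (\<integral>\<zeta>. \<zeta> \<partial>Q))"
  proof (rule SUP_mono)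
    fix Q assume Q: "Q \<in> wball p (\<lambda>a b. lqnorm q (a - b)) \<Xi> (empirical N xi \<Xi>) \<epsilon>"
    have k: "distr Q (restrict_space borel (F x ` \<Xi>)) (F x)
           \<in> wball p (\<lambda>s t. \<bar>s - t\<bar>) (F x ` \<Xi>) (empirical N (\<lambda>i. F x (xi i)) (F x ` \<Xi>)) (\<epsilon> * lip_norm q (F x) \<Xi>)
         \<and> integral\<^sup>L Q (F x) = integral\<^sup>L (distr Q (restrict_space borel (F x ` \<Xi>)) (F x)) (\<lambda>z. z)"
      by (rule key[OF assms(1,2) assms(4)[OF x] assms(5) assms(6) Q])
    then show "\<exists>Q'\<in>wball p (\<lambda>s t. \<bar>s - t\<bar>) (F x ` \<Xi>) (empirical N (\<lambda>i. F x (xi i)) (F x ` \<Xi>)) (\<epsilon> * lip_norm q (F x) \<Xi>).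
        ereal (\<integral>\<xi>. F x \<xi> \<partial>Q) \<le> ereal (\<integral>\<zeta>. \<zeta> \<partial>Q')"
      by (intro bexI[of _ "distr Q (restrict_space borel (F x ` \<Xi>)) (F x)"]) auto
  qed
  then show "\<exists>x'\<in>X. (SUP Q\<in>wball p (\<lambda>a b. lqnorm q (a - b)) \<Xi> (empirical N xi \<Xi>) \<epsilon>. ereal (\<integral>\<xi>. F x' \<xi> \<partial>Q))
     \<le> (SUP Q\<in>wball p (\<lambda>s t. \<bar>s - t\<bar>) (F x ` \<Xi>) (empirical N (\<lambda>i. F x (xi i)) (F x ` \<Xi>)) (\<epsilon> * lip_norm q (F x) \<Xi>).
        ereal (\<integral>\<zeta>. \<zeta> \<partial>Q))"
    using x by blast
qed

end
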